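(* Let $d\ge 1$ and let $P\subset\mathbb{R}^d$ be a finite set of $n\ge 1$ points. Then there exists $p\in P$ such that $p\in T$ for every orthant $T$ of fixed orientation with $|T\cap P|>(1-\frac{1}{d})n$.
   Context: An orthant of fixed orientation in $\mathbb{R}^d$ is a set of the form $\{x\in\mathbb{R}^d: x_j\le a_j \text{ for all } 1\le j\le d\}$ with $a_1,\dots,a_d\in\mathbb{R}$ (the intersection of $d$ halfspaces whose outward normals are the $d$ positive coordinate directions). *)

theory Defs
  imports "HOL-Analysis.Analysis"
begin

definition orthant :: "real^'n \<Rightarrow> (real^'n) set" where
  "orthant a = {x. \<forall>j. x $ j \<le> a $ j}"

end

theory Submission
  imports Defs
begin

theorem corollary3:
  fixes P :: "(real^'n) set"
  assumes "finite P" and "P \<noteq> {}"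
  shows "\<exists>p\<in>P. \<forall>a::real^'n.
           real (card (orthant a \<inter> P)) > (1 - 1 / real CARD('n)) * real (card P)
           \<longrightarrow> p \<in> orthant a"
proof -
  define d where "d = real CARD('n)"
  define n where "n = real (card P)"
  have d1: "d \<ge> 1" unfolding d_def by simp
  have npos: "n > 0" unfolding n_def using assms by (simp add: card_gt_0_iff)
  define bad where "bad j = {x\<in>P. real (card {y\<in>P. y $ j \<ge> x $ j}) * d < n}" for j
  have badsmall: "real (card (bad j)) * d < n" for j
  proof (cases "bad j = {}")
    case True then show ?thesis using npos by simp
  next
    case False
    have fin: "finite (bad j)" unfolding bad_def using assms(1) by simp
    obtain x where x: "x \<in> bad j" "\<forall>z\<in>bad j. x $ j \<le> z $ j"
    proof -
      have "finite ((\<lambda>z. z $ j) ` bad j)" "(\<lambda>z. z $ j) ` bad j \<noteq> {}" using fin False by auto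
      then have "Min ((\<lambda>z. z $ j) ` bad j) \<in> (\<lambda>z. z $ j) ` bad j" by (rule Min_in)
      then obtain x where "x \<in> bad j" "x $ j = Min ((\<lambda>z. z $ j) ` bad j)"
        by (auto simp del: Min_in)
      moreover have "\<forall>z\<in>bad j. Min ((\<lambda>z. z $ j) ` bad j) \<le> z $ j" using fin by auto
      ultimately show ?thesis using that by auto
    qed
    have "bad j \<subseteq> {y\<in>P. y $ j \<ge> x $ j}" using x(2) unfolding bad_def by auto
    hence "card (bad j) \<le> card {y\<in>P. y $ j \<ge> x $ j}"
      by (intro card_mono) (use assms(1) in auto)
    hence "real (card (bad j)) * d \<le> real (card {y\<in>P. y $ j \<ge> x $ j}) * d"
      using d1 by (intro mult_right_mono) auto
    also have "\<dots> < n" using x(1) unfolding bad_def by auto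
    finally show ?thesis .
  qed
  have "(\<Sum>j\<in>UNIV. real (card (bad j)) * d) < (\<Sum>j\<in>(UNIV::'n set). n)"
    by (rule sum_strict_mono) (use badsmall in auto)
  hence "(\<Sum>j\<in>UNIV. real (card (bad j))) * d < d * n"
    by (simp add: sum_distrib_right d_def)
  hence sumlt: "(\<Sum>j\<in>UNIV. real (card (bad j))) < n" using d1 by simp
  have cu: "card (\<Union>j. bad j) \<le> (\<Sum>j\<in>UNIV. card (bad j))" by (rule card_UN_le) simp
  have "real (\<Sum>j\<in>UNIV. card (bad j)) < n" using sumlt by simp
  hence "(\<Sum>j\<in>UNIV. card (bad j)) < card P" unfolding n_def by linarith
  hence "card (\<Union>j. bad j) < card P" using cu by linarith
  moreover have "(\<Union>j. bad j) \<subseteq> P" unfolding bad_def by auto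
  ultimately have "\<not> P \<subseteq> (\<Union>j. bad j)"
    using card_mono[of "\<Union>j. bad j" P] assms(1) by (metis finite_subset subset_antisym not_le)
  then obtain p where p: "p \<in> P" "\<forall>j. p \<notin> bad j" by blast
  show ?thesis
  proof (intro bexI[OF _ p(1)] allI impI)
    fix a :: "real^'n"
    assume big: "real (card (orthant a \<inter> P)) > (1 - 1 / real CARD('n)) * real (card P)"
    show "p \<in> orthant a"
    proof (rule ccontr)
      assume "p \<notin> orthant a"
      then obtain j where j: "p $ j > a $ j" unfolding orthant_def by (auto simp: not_le)
      have sub: "{y\<in>P. y $ j \<ge> p $ j} \<subseteq> P - orthant a \<inter> P"
        using j unfolding orthant_def by (auto simp: not_le) (metis order.trans not_le)
      have "card {y\<in>P. y $ j \<ge> p $ j} \<le> card (P - orthant a \<inter> P)"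
        by (rule card_mono[OF _ sub]) (use assms(1) in auto)
      also have "\<dots> = card P - card (orthant a \<inter> P)"
        by (rule card_Diff_subset) (use assms(1) in auto)
      finally have c: "real (card {y\<in>P. y $ j \<ge> p $ j}) \<le> n - real (card (orthant a \<inter> P))"
        unfolding n_def using card_mono[OF assms(1), of "orthant a \<inter> P"] by (simp add: of_nat_diff)
      have "(n - real (card (orthant a \<inter> P))) * d < n"
      proof -
        have "(1 - 1/d) * n < real (card (orthant a \<inter> P))" using big unfolding d_def n_def by simp
        hence "d * ((1 - 1/d) * n) < d * real (card (orthant a \<inter> P))" using d1 by simp
        moreover have "d * ((1 - 1/d) * n) = d*n - n" using d1 by (simp add: field_simps)
        ultimately show ?thesis by (simp add: algebra_simps)
      qed
      hence "real (card {y\<in>P. y $ j \<ge> p $ j}) * d < n"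
        proof -
        have "real (card {y\<in>P. y $ j \<ge> p $ j}) * d \<le> (n - real (card (orthant a \<inter> P))) * d"
          using c d1 by (intro mult_right_mono) auto
        thus ?thesis using \<open>(n - real (card (orthant a \<inter> P))) * d < n\<close> by linarith
      qed
      hence "p \<in> bad j" unfolding bad_def using p(1) by simp
      thus False using p(2) by simp
    qed
  qed
qed

end
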